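(* Consider the model below with $M=M_f=N=1$ and $\epsilon_2\ge0$, and fix all parameters other than $\epsilon_1$. (i) There exists $\bar{\epsilon}_{RPE}\in[-\infty,\infty)$, depending only on the model parameters, such that for every $\epsilon_1\in\mathbb{R}$ a restricted perceptions equilibrium (RPE) exists if and only if $\epsilon_1\ge\bar{\epsilon}_{RPE}$; moreover $\bar{\epsilon}_{RPE}=-\infty$ if $q=1$. (ii) Let $\bar{\epsilon}_{REE}\in[-\infty,\infty)$ be the number such that a rational expectations equilibrium (REE) exists if and only if $\epsilon_1\ge\bar{\epsilon}_{REE}$. Then $\bar{\epsilon}_{REE}\ge\bar{\epsilon}_{RPE}$ if and only if $p+q\ge1$.
   Context: Parameters: $0<\beta<1$, $\sigma,\lambda,\mu>0$, $\psi>1$, $p,q\in(0,1]$ with $(p,q)\neq(1,1)$. The shock $\epsilon_t$ is a two-state Markov chain on $\{\epsilon_1,\epsilon_2\}$ with $\Pr(\epsilon_{t+1}=\epsilon_1\mid\epsilon_t=\epsilon_1)=p$, $\Pr(\epsilon_{t+1}=\epsilon_2\mid\epsilon_t=\epsilon_2)=q$; $\bar q:=(1-p)/(2-p-q)$ is the stationary probability of state 2. Model: $x_t=\hat E_t x_{t+1}-\sigma(i_t-\hat E_t\pi_{t+1})+\epsilon_t$, $\pi_t=\lambda x_t+\beta\hat E_t\pi_{t+1}$, $i_t=\max\{\psi\pi_t,-\mu\}$. For vectors $Y_j=(x_j,\pi_j)$, $j=1,2$, and forecasts $Y^e_j=(x^e_j,\pi^e_j)$, say $(Y_1,Y_2)$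 solves the model given $(Y^e_1,Y^e_2)$ if for $j=1,2$, with $i_j=\max\{\psi\pi_j,-\mu\}$, $x_j=x^e_j-\sigma(i_j-\pi^e_j)+\epsilon_j$ and $\pi_j=\lambda x_j+\beta\pi^e_j$. An REE is $(Y_1,Y_2)$ solving the model given $Y^e_1=pY_1+(1-p)Y_2$, $Y^e_2=(1-q)Y_1+qY_2$. An RPE is $(Y_1,Y_2)$ solving the model given $Y^e_1=Y^e_2=\bar Y:=\bar qY_2+(1-\bar q)Y_1$ (agents forecast with the unconditional mean, and the forecast equals the actual unconditional mean). *)

theory Defs
  imports Complex_Main "HOL-Library.Extended_Real"
begin

definition comb :: "real \<Rightarrow> real \<times> real \<Rightarrow> real \<times> real \<Rightarrow> real \<times> real" where
  "comb a Y1 Y2 = (a * fst Y1 + (1 - a) * fst Y2, a * snd Y1 + (1 - a) * snd Y2)"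

definition solves1 :: "real \<Rightarrow> real \<Rightarrow> real \<Rightarrow> real \<Rightarrow> real \<Rightarrow> real
    \<Rightarrow> real \<times> real \<Rightarrow> real \<times> real \<Rightarrow> bool" where
  "solves1 \<beta> \<sigma> \<kappa> \<mu> \<psi> eps Y Ye =
     (let x = fst Y; \<pi> = snd Y; xe = fst Ye; \<pi>e = snd Ye; i = max (\<psi> * \<pi>) (- \<mu>) in
        x = xe - \<sigma> * (i - \<pi>e) + eps \<and> \<pi> = \<kappa> * x + \<beta> * \<pi>e)"

definition solves :: "real \<Rightarrow> real \<Rightarrow> real \<Rightarrow> real \<Rightarrow> real \<Rightarrow> real \<Rightarrow> real
    \<Rightarrow> real \<times> real \<Rightarrow> real \<times> real \<Rightarrow> real \<times> real \<Rightarrow> real \<times> real \<Rightarrow> bool" where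
  "solves \<beta> \<sigma> \<kappa> \<mu> \<psi> \<epsilon>1 \<epsilon>2 Y1 Y2 Ye1 Ye2 =
     (solves1 \<beta> \<sigma> \<kappa> \<mu> \<psi> \<epsilon>1 Y1 Ye1 \<and> solves1 \<beta> \<sigma> \<kappa> \<mu> \<psi> \<epsilon>2 Y2 Ye2)"

text \<open>Stationary probability of state 2.\<close>
definition qbar :: "real \<Rightarrow> real \<Rightarrow> real" where
  "qbar p q = (1 - p) / (2 - p - q)"

definition REE :: "real \<Rightarrow> real \<Rightarrow> real \<Rightarrow> real \<Rightarrow> real \<Rightarrow> real \<Rightarrow> real \<Rightarrow> real \<Rightarrow> real
    \<Rightarrow> real \<times> real \<Rightarrow> real \<times> real \<Rightarrow> bool" where
  "REE \<beta> \<sigma> \<kappa> \<mu> \<psi> p q \<epsilon>1 \<epsilon>2 Y1 Y2 =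
     solves \<beta> \<sigma> \<kappa> \<mu> \<psi> \<epsilon>1 \<epsilon>2 Y1 Y2 (comb p Y1 Y2) (comb (1 - q) Y1 Y2)"

definition RPE :: "real \<Rightarrow> real \<Rightarrow> real \<Rightarrow> real \<Rightarrow> real \<Rightarrow> real \<Rightarrow> real \<Rightarrow> real \<Rightarrow> real
    \<Rightarrow> real \<times> real \<Rightarrow> real \<times> real \<Rightarrow> bool" where
  "RPE \<beta> \<sigma> \<kappa> \<mu> \<psi> p q \<epsilon>1 \<epsilon>2 Y1 Y2 =
     (let Ybar = comb (1 - qbar p q) Y1 Y2 in
      solves \<beta> \<sigma> \<kappa> \<mu> \<psi> \<epsilon>1 \<epsilon>2 Y1 Y2 Ybar Ybar)"

end

theory Submission
  imports Defs
begin

definition rho :: "real \<Rightarrow> real \<Rightarrow> real" where "rho \<psi> y = \<psi> * max y 0 - y"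

definition Sys :: "real \<Rightarrow> real \<Rightarrow> real \<Rightarrow> real \<Rightarrow> real \<Rightarrow> real \<Rightarrow> real \<Rightarrow> real \<Rightarrow> bool" where
  "Sys s \<psi> c1 c2 X E y1 y2 \<longleftrightarrow> X = s * rho \<psi> y1 + c1*(y1-y2) \<and> E = s * rho \<psi> y2 - c2*(y1-y2)"

lemma core1:
  fixes \<psi> \<kappa> \<epsilon>1 \<sigma> \<mu> m1 \<pi>1 \<pi>2 \<alpha> \<gamma> \<beta> xa xb c1 A B1 B2 :: real
  assumes "c1 = (1-\<alpha>)*(1-\<beta>*(\<alpha>-\<gamma>)+\<kappa>*\<sigma>)"
    and "A = \<epsilon>1 - xa + (\<alpha>*xa+(1-\<alpha>)*xb) - \<sigma>*(m1 - (\<alpha>*\<pi>1+(1-\<alpha>)*\<pi>2))"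
    and "B1 = \<kappa>*xa - \<pi>1 + \<beta>*(\<alpha>*\<pi>1+(1-\<alpha>)*\<pi>2)"
    and "B2 = \<kappa>*xb - \<pi>2 + \<beta>*(\<gamma>*\<pi>1+(1-\<gamma>)*\<pi>2)"
  shows "\<psi>*\<kappa>*\<epsilon>1 + \<kappa>*\<sigma>*(\<psi>-1)*\<mu> - (\<kappa>*\<sigma>*(\<psi>*(m1+\<mu>) - (\<psi>*\<pi>1+\<mu>)) + c1*((\<psi>*\<pi>1+\<mu>)-(\<psi>*\<pi>2+\<mu>)))
    = \<psi>*(\<kappa>*A + (1-\<alpha>)*(B1 - B2))"
  unfolding assms by (simp add: algebra_simps)

lemma core2:
  fixes \<psi> \<kappa> \<epsilon>2 \<sigma> \<mu> m2 \<pi>1 \<pi>2 \<alpha> \<gamma> \<beta> xa xb c2 A B1 B2 :: real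
  assumes "c2 = \<gamma>*(1-\<beta>*(\<alpha>-\<gamma>)+\<kappa>*\<sigma>)"
    and "A = \<epsilon>2 - xb + (\<gamma>*xa+(1-\<gamma>)*xb) - \<sigma>*(m2 - (\<gamma>*\<pi>1+(1-\<gamma>)*\<pi>2))"
    and "B1 = \<kappa>*xa - \<pi>1 + \<beta>*(\<alpha>*\<pi>1+(1-\<alpha>)*\<pi>2)"
    and "B2 = \<kappa>*xb - \<pi>2 + \<beta>*(\<gamma>*\<pi>1+(1-\<gamma>)*\<pi>2)"
  shows "\<psi>*\<kappa>*\<epsilon>2 + \<kappa>*\<sigma>*(\<psi>-1)*\<mu> - (\<kappa>*\<sigma>*(\<psi>*(m2+\<mu>) - (\<psi>*\<pi>2+\<mu>)) - c2*((\<psi>*\<pi>1+\<mu>)-(\<psi>*\<pi>2+\<mu>)))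
    = \<psi>*(\<kappa>*A - \<gamma>*(B1 - B2))"
  unfolding assms by (simp add: algebra_simps)

lemma bridge:
  fixes \<beta> \<sigma> \<kappa> \<mu> \<psi> \<alpha> \<gamma> ea eb :: real
  assumes k: "\<kappa> > 0" and ps: "\<psi> > 0"
  shows "(\<exists>Y1 Y2. solves \<beta> \<sigma> \<kappa> \<mu> \<psi> ea eb Y1 Y2 (comb \<alpha> Y1 Y2) (comb \<gamma> Y1 Y2)) \<longleftrightarrow>
    (\<exists>y1 y2. Sys (\<kappa>*\<sigma>) \<psi> ((1-\<alpha>)*(1-\<beta>*(\<alpha>-\<gamma>)+\<kappa>*\<sigma>)) (\<gamma>*(1-\<beta>*(\<alpha>-\<gamma>)+\<kappa>*\<sigma>))
        (\<psi>*\<kappa>*ea + \<kappa>*\<sigma>*(\<psi>-1)*\<mu>) (\<psi>*\<kappa>*eb + \<kappa>*\<sigma>*(\<psi>-1)*\<mu>) y1 y2)"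
    (is "?L \<longleftrightarrow> ?R")
proof
  assume ?L
  then obtain Y1 Y2 where H: "solves \<beta> \<sigma> \<kappa> \<mu> \<psi> ea eb Y1 Y2 (comb \<alpha> Y1 Y2) (comb \<gamma> Y1 Y2)" by blast
  obtain x1 \<pi>1 where Y1: "Y1 = (x1, \<pi>1)" by (cases Y1)
  obtain x2 \<pi>2 where Y2: "Y2 = (x2, \<pi>2)" by (cases Y2)
  define m1 where "m1 = max (\<psi>*\<pi>1) (-\<mu>)"
  define m2 where "m2 = max (\<psi>*\<pi>2) (-\<mu>)"
  from H have h1: "x1 = (\<alpha>*x1+(1-\<alpha>)*x2) - \<sigma>*(m1 - (\<alpha>*\<pi>1+(1-\<alpha>)*\<pi>2)) + ea"
    and h2: "\<pi>1 = \<kappa>*x1 + \<beta>*(\<alpha>*\<pi>1+(1-\<alpha>)*\<pi>2)"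
    and h3: "x2 = (\<gamma>*x1+(1-\<gamma>)*x2) - \<sigma>*(m2 - (\<gamma>*\<pi>1+(1-\<gamma>)*\<pi>2)) + eb"
    and h4: "\<pi>2 = \<kappa>*x2 + \<beta>*(\<gamma>*\<pi>1+(1-\<gamma>)*\<pi>2)"
    by (simp_all add: Y1 Y2 solves_def solves1_def comb_def Let_def m1_def m2_def)
  have mx1: "max (\<psi>*\<pi>1+\<mu>) 0 = m1 + \<mu>" by (simp add: m1_def max_def)
  have mx2: "max (\<psi>*\<pi>2+\<mu>) 0 = m2 + \<mu>" by (simp add: m2_def max_def)
  have e1: "\<psi>*\<kappa>*ea + \<kappa>*\<sigma>*(\<psi>-1)*\<mu> - (\<kappa>*\<sigma>*(\<psi>*(m1+\<mu>) - (\<psi>*\<pi>1+\<mu>)) + ((1-\<alpha>)*(1-\<beta>*(\<alpha>-\<gamma>)+\<kappa>*\<sigma>))*((\<psi>*\<pi>1+\<mu>)-(\<psi>*\<pi>2+\<mu>)))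
    = \<psi>*(\<kappa>*0 + (1-\<alpha>)*(0 - 0))"
    by (rule core1[where xa=x1 and xb=x2]) (use h1 h2 h4 in auto)
  have e2: "\<psi>*\<kappa>*eb + \<kappa>*\<sigma>*(\<psi>-1)*\<mu> - (\<kappa>*\<sigma>*(\<psi>*(m2+\<mu>) - (\<psi>*\<pi>2+\<mu>)) - (\<gamma>*(1-\<beta>*(\<alpha>-\<gamma>)+\<kappa>*\<sigma>))*((\<psi>*\<pi>1+\<mu>)-(\<psi>*\<pi>2+\<mu>)))
    = \<psi>*(\<kappa>*0 - \<gamma>*(0 - 0))"
    by (rule core2[where xa=x1 and xb=x2]) (use h3 h2 h4 in auto)
  show ?R
    apply (rule exI[of _ "\<psi>*\<pi>1+\<mu>"], rule exI[of _ "\<psi>*\<pi>2+\<mu>"])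
    unfolding Sys_def rho_def mx1 mx2 using e1 e2 by simp
next
  assume ?R
  then obtain y1 y2 where S: "Sys (\<kappa>*\<sigma>) \<psi> ((1-\<alpha>)*(1-\<beta>*(\<alpha>-\<gamma>)+\<kappa>*\<sigma>)) (\<gamma>*(1-\<beta>*(\<alpha>-\<gamma>)+\<kappa>*\<sigma>))
        (\<psi>*\<kappa>*ea + \<kappa>*\<sigma>*(\<psi>-1)*\<mu>) (\<psi>*\<kappa>*eb + \<kappa>*\<sigma>*(\<psi>-1)*\<mu>) y1 y2" by blast
  define \<pi>1 where "\<pi>1 = (y1 - \<mu>)/\<psi>"
  define \<pi>2 where "\<pi>2 = (y2 - \<mu>)/\<psi>"
  define x1 where "x1 = (\<pi>1 - \<beta>*(\<alpha>*\<pi>1+(1-\<alpha>)*\<pi>2))/\<kappa>"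
  define x2 where "x2 = (\<pi>2 - \<beta>*(\<gamma>*\<pi>1+(1-\<gamma>)*\<pi>2))/\<kappa>"
  define m1 where "m1 = max (\<psi>*\<pi>1) (-\<mu>)"
  define m2 where "m2 = max (\<psi>*\<pi>2) (-\<mu>)"
  have y1: "y1 = \<psi>*\<pi>1+\<mu>" using ps by (simp add: \<pi>1_def)
  have y2: "y2 = \<psi>*\<pi>2+\<mu>" using ps by (simp add: \<pi>2_def)
  have mx1: "max (\<psi>*\<pi>1+\<mu>) 0 = m1 + \<mu>" by (simp add: m1_def max_def)
  have mx2: "max (\<psi>*\<pi>2+\<mu>) 0 = m2 + \<mu>" by (simp add: m2_def max_def)
  have B1: "\<kappa>*x1 - \<pi>1 + \<beta>*(\<alpha>*\<pi>1+(1-\<alpha>)*\<pi>2) = 0" using k by (simp add: x1_def)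
  have B2: "\<kappa>*x2 - \<pi>2 + \<beta>*(\<gamma>*\<pi>1+(1-\<gamma>)*\<pi>2) = 0" using k by (simp add: x2_def)
  define A1 where "A1 = ea - x1 + (\<alpha>*x1+(1-\<alpha>)*x2) - \<sigma>*(m1 - (\<alpha>*\<pi>1+(1-\<alpha>)*\<pi>2))"
  define A2 where "A2 = eb - x2 + (\<gamma>*x1+(1-\<gamma>)*x2) - \<sigma>*(m2 - (\<gamma>*\<pi>1+(1-\<gamma>)*\<pi>2))"
  have e1: "\<psi>*\<kappa>*ea + \<kappa>*\<sigma>*(\<psi>-1)*\<mu> - (\<kappa>*\<sigma>*(\<psi>*(m1+\<mu>) - (\<psi>*\<pi>1+\<mu>)) + ((1-\<alpha>)*(1-\<beta>*(\<alpha>-\<gamma>)+\<kappa>*\<sigma>))*((\<psi>*\<pi>1+\<mu>)-(\<psi>*\<pi>2+\<mu>)))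
    = \<psi>*(\<kappa>*A1 + (1-\<alpha>)*(0 - 0))"
    by (rule core1[where xa=x1 and xb=x2]) (use B1 B2 A1_def in auto)
  have e2: "\<psi>*\<kappa>*eb + \<kappa>*\<sigma>*(\<psi>-1)*\<mu> - (\<kappa>*\<sigma>*(\<psi>*(m2+\<mu>) - (\<psi>*\<pi>2+\<mu>)) - (\<gamma>*(1-\<beta>*(\<alpha>-\<gamma>)+\<kappa>*\<sigma>))*((\<psi>*\<pi>1+\<mu>)-(\<psi>*\<pi>2+\<mu>)))
    = \<psi>*(\<kappa>*A2 - \<gamma>*(0 - 0))"
    by (rule core2[where xa=x1 and xb=x2]) (use B1 B2 A2_def in auto)
  from S have "\<psi>*(\<kappa>*A1 + (1-\<alpha>)*(0 - 0)) = 0" "\<psi>*(\<kappa>*A2 - \<gamma>*(0 - 0)) = 0"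
    unfolding e1[symmetric] e2[symmetric] by (simp_all add: Sys_def rho_def y1 y2 mx1 mx2)
  hence "A1 = 0" "A2 = 0" using k ps by auto
  hence "solves \<beta> \<sigma> \<kappa> \<mu> \<psi> ea eb (x1,\<pi>1) (x2,\<pi>2) (comb \<alpha> (x1,\<pi>1) (x2,\<pi>2)) (comb \<gamma> (x1,\<pi>1) (x2,\<pi>2))"
    using B1 B2 by (simp add: solves_def solves1_def comb_def Let_def A1_def A2_def m1_def m2_def algebra_simps)
  thus ?L by blast
qed


lemma rho_pos: "y \<ge> 0 \<Longrightarrow> rho \<psi> y = (\<psi>-1)*y" by (simp add: rho_def algebra_simps)
lemma rho_neg: "y \<le> 0 \<Longrightarrow> rho \<psi> y = -y" by (simp add: rho_def)

lemma necess:
  fixes s \<psi> c1 c2 X E y1 y2 :: real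
  assumes s: "s > 0" and ps: "\<psi> > 1" and c1: "c1 \<ge> 0" and c2: "c2 \<ge> 0"
    and S: "Sys s \<psi> c1 c2 X E y1 y2"
  shows "(s*(\<psi>-1)+c2)*X + c1*E \<ge> 0 \<or> c2*X + (c1-s)*E \<ge> 0"
proof -
  from S have X: "X = s * rho \<psi> y1 + c1*(y1-y2)" and E: "E = s * rho \<psi> y2 - c2*(y1-y2)"
    by (simp_all add: Sys_def)
  have p1: "\<psi> - 1 > 0" using ps by simp
  show ?thesis
  proof (cases "y1 \<ge> 0")
    case y1: True
    show ?thesis
    proof (cases "y2 \<ge> 0")
      case y2: True
      have "(s*(\<psi>-1)+c2)*X + c1*E = s*((\<psi>-1)*y1*(s*(\<psi>-1)+c1+c2))"
        by (simp add: X E rho_pos y1 y2 algebra_simps)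
      moreover have "s*((\<psi>-1)*y1*(s*(\<psi>-1)+c1+c2)) \<ge> 0"
        using s p1 y1 c1 c2 by (intro mult_nonneg_nonneg add_nonneg_nonneg) auto
      ultimately show ?thesis by simp
    next
      case False
      hence y2: "y2 \<le> 0" by simp
      have "(s*(\<psi>-1)+c2)*X + c1*E = s*((\<psi>-1)*y1*(s*(\<psi>-1)+c1+c2) + c1*\<psi>*(-y2))"
        by (simp add: X E rho_pos rho_neg y1 y2 algebra_simps)
      moreover have "s*((\<psi>-1)*y1*(s*(\<psi>-1)+c1+c2) + c1*\<psi>*(-y2)) \<ge> 0"
        using s p1 y1 y2 c1 c2 ps by (intro mult_nonneg_nonneg add_nonneg_nonneg) auto
      ultimately show ?thesis by simp
    qed
  next
    case False
    hence y1: "y1 \<le> 0" by simp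
    show ?thesis
    proof (cases "y2 \<ge> 0")
      case y2: True
      define Q where "Q = (\<psi>-1)*(s-c1)+c2"
      have L: "(s*(\<psi>-1)+c2)*X + c1*E = s*(-y1)*Q"
        by (simp add: X E rho_pos rho_neg y1 y2 Q_def algebra_simps)
      have M: "c2*X + (c1-s)*E = s*y2*(-Q)"
        by (simp add: X E rho_pos rho_neg y1 y2 Q_def algebra_simps)
      show ?thesis
      proof (cases "Q \<ge> 0")
        case True
        hence "s*(-y1)*Q \<ge> 0" using s y1 by (intro mult_nonneg_nonneg) auto
        thus ?thesis using L by simp
      next
        case False
        hence "s*y2*(-Q) \<ge> 0" using s y2 by (intro mult_nonneg_nonneg) auto
        thus ?thesis using M by simp
      qed
    next
      case False
      hence y2: "y2 \<le> 0" by simp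
      have M: "c2*X + (c1-s)*E = s*((c1+c2-s)*(-y2))"
        by (simp add: X E rho_pos rho_neg y1 y2 algebra_simps)
      have L: "(s*(\<psi>-1)+c2)*X + c1*E = s*((-y1)*((\<psi>-1)*(s-c1)+c2) + c1*\<psi>*(-y2))"
        by (simp add: X E rho_pos rho_neg y1 y2 algebra_simps)
      show ?thesis
      proof (cases "c1 + c2 \<ge> s")
        case True
        hence "s*((c1+c2-s)*(-y2)) \<ge> 0" using s y2 by (intro mult_nonneg_nonneg) auto
        thus ?thesis using M by simp
      next
        case False
        hence "s - c1 \<ge> 0" using c2 by simp
        hence "s*((-y1)*((\<psi>-1)*(s-c1)+c2) + c1*\<psi>*(-y2)) \<ge> 0"
          using s y1 y2 c1 c2 p1 ps by (intro mult_nonneg_nonneg add_nonneg_nonneg) auto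
        thus ?thesis using L by simp
      qed
    qed
  qed
qed


lemma suff:
  fixes s \<psi> c1 c2 X E :: real
  assumes s: "s > 0" and ps: "\<psi> > 1" and c1: "c1 \<ge> 0" and c2: "c2 \<ge> 0" and E: "E > 0"
    and cc: "c2 > 0 \<or> c1 > s"
    and P: "(s*(\<psi>-1)+c2)*X + c1*E \<ge> 0 \<or> c2*X + (c1-s)*E \<ge> 0"
  shows "\<exists>y1 y2. Sys s \<psi> c1 c2 X E y1 y2"
proof -
  define L where "L = (s*(\<psi>-1)+c2)*X + c1*E"
  define M where "M = c2*X + (c1-s)*E"
  define A2 where "A2 = s*(\<psi>-1)+c2"
  define G where "G = s*(\<psi>-1)+c1+c2"
  have p1: "\<psi> - 1 > 0" using ps by simp
  have A2: "A2 > 0" unfolding A2_def using s p1 c2 by (simp add: add_pos_nonneg)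
  have G: "G > 0" unfolding G_def using s p1 c1 c2 by (simp add: add_pos_nonneg)
  have sp: "s*(\<psi>-1) > 0" using s p1 by simp
  show ?thesis
  proof (cases "L \<ge> 0")
    case True
    define y1 where "y1 = L/(s*(\<psi>-1)*G)"
    define y2 where "y2 = (E + c2*y1)/A2"
    have y1: "y1 \<ge> 0" unfolding y1_def using True sp G by simp
    have y2: "y2 \<ge> 0" unfolding y2_def using y1 E c2 A2 by simp
    have hy1: "s*(\<psi>-1)*G*y1 = L" unfolding y1_def using sp G s p1 by simp
    have hy2: "A2*y2 = E + c2*y1" unfolding y2_def using A2 by simp
    have "A2*(s*(\<psi>-1)*y1 + c1*(y1-y2)) = (A2*(s*(\<psi>-1)+c1) - c1*c2)*y1 - c1*(A2*y2 - c2*y1)"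
      by (simp add: algebra_simps)
    also have "(A2*(s*(\<psi>-1)+c1) - c1*c2) = s*(\<psi>-1)*G"
      by (simp add: A2_def G_def algebra_simps)
    also have "s*(\<psi>-1)*G*y1 - c1*(A2*y2 - c2*y1) = A2*X"
      using hy1 hy2 by (simp add: L_def A2_def algebra_simps)
    finally have "A2*(s*(\<psi>-1)*y1 + c1*(y1-y2)) = A2*X" .
    hence eX: "X = s*(\<psi>-1)*y1 + c1*(y1-y2)" using A2 by simp
    have eE: "E = s*(\<psi>-1)*y2 - c2*(y1-y2)"
      using hy2 by (simp add: A2_def algebra_simps)
    have "Sys s \<psi> c1 c2 X E y1 y2"
      unfolding Sys_def using eX eE y1 y2 by (simp add: rho_pos algebra_simps)
    thus ?thesis by blast
  next
    case False
    hence Ln: "L < 0" by simp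
    hence Mp: "M \<ge> 0" using P L_def M_def by auto
    define Q where "Q = (\<psi>-1)*(s-c1)+c2"
    have id: "c2*L = A2*M + s*Q*E" by (simp add: L_def M_def A2_def Q_def algebra_simps)
    have Qn: "Q < 0"
    proof (rule ccontr)
      assume "\<not> Q < 0"
      hence Q0: "Q \<ge> 0" by simp
      have "A2*M + s*Q*E \<ge> 0" using A2 Mp Q0 s E by (intro add_nonneg_nonneg mult_nonneg_nonneg) auto
      hence "c2*L \<ge> 0" using id by simp
      hence "c2 \<le> 0" using Ln by (simp add: mult_le_0_iff zero_le_mult_iff)
      hence c20: "c2 = 0" using c2 by simp
      hence "A2*M + s*Q*E = 0" using id by simp
      moreover have "A2*M \<ge> 0" using A2 Mp by simp
      moreover have "s*Q*E \<ge> 0" using s Q0 E by simp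
      ultimately have "s*Q*E = 0" by linarith
      hence "Q = 0" using s E by simp
      hence "(\<psi>-1)*(s-c1) = 0" using c20 Q_def by simp
      hence "c1 = s" using p1 by simp
      thus False using cc c20 by simp
    qed
    have sQ: "s*Q < 0" using s Qn by (simp add: mult_pos_neg)
    define y1 where "y1 = -L/(s*Q)"
    define y2 where "y2 = -M/(s*Q)"
    have y1: "y1 \<le> 0" unfolding y1_def using Ln sQ divide_neg_neg[of L "s*Q"] by simp
    have y2: "y2 \<ge> 0" unfolding y2_def using Mp sQ divide_nonneg_neg[of M "s*Q"] by simp
    have hy1: "s*Q*y1 = -L" unfolding y1_def using sQ s Qn by simp
    have hy2: "s*Q*y2 = -M" unfolding y2_def using sQ s Qn by simp
    have "s*Q*(-s*y1 + c1*(y1-y2)) = -s*(s*Q*y1) + c1*(s*Q*y1 - s*Q*y2)" by (simp add: algebra_simps)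
    also have "\<dots> = s*Q*X" unfolding hy1 hy2 by (simp add: L_def M_def Q_def algebra_simps)
    finally have eX: "X = -s*y1 + c1*(y1-y2)" using sQ s Qn by auto
    have "s*Q*(s*(\<psi>-1)*y2 - c2*(y1-y2)) = s*(\<psi>-1)*(s*Q*y2) - c2*(s*Q*y1 - s*Q*y2)" by (simp add: algebra_simps)
    also have "\<dots> = s*Q*E" unfolding hy1 hy2 using id by (simp add: A2_def algebra_simps)
    finally have eE: "E = s*(\<psi>-1)*y2 - c2*(y1-y2)" using sQ s Qn by auto
    have "Sys s \<psi> c1 c2 X E y1 y2"
      unfolding Sys_def using eX eE y1 y2 by (simp add: rho_pos rho_neg algebra_simps)
    thus ?thesis by blast
  qed
qed


lemma rpe_iff:
  fixes \<beta> \<sigma> \<kappa> \<mu> \<psi> p q \<epsilon>1 \<epsilon>2 :: real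
  assumes "\<kappa> > 0" "\<psi> > 0"
  shows "(\<exists>Y1 Y2. RPE \<beta> \<sigma> \<kappa> \<mu> \<psi> p q \<epsilon>1 \<epsilon>2 Y1 Y2) \<longleftrightarrow>
    (\<exists>y1 y2. Sys (\<kappa>*\<sigma>) \<psi> (qbar p q*(1+\<kappa>*\<sigma>)) ((1-qbar p q)*(1+\<kappa>*\<sigma>))
        (\<psi>*\<kappa>*\<epsilon>1 + \<kappa>*\<sigma>*(\<psi>-1)*\<mu>) (\<psi>*\<kappa>*\<epsilon>2 + \<kappa>*\<sigma>*(\<psi>-1)*\<mu>) y1 y2)"
proof -
  define w where "w = qbar p q"
  have c1: "(1-(1-w))*(1-\<beta>*((1-w)-(1-w))+\<kappa>*\<sigma>) = w*(1+\<kappa>*\<sigma>)" by simp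
  have c2: "(1-w)*(1-\<beta>*((1-w)-(1-w))+\<kappa>*\<sigma>) = (1-w)*(1+\<kappa>*\<sigma>)" by simp
  have A: "(\<exists>Y1 Y2. RPE \<beta> \<sigma> \<kappa> \<mu> \<psi> p q \<epsilon>1 \<epsilon>2 Y1 Y2) \<longleftrightarrow>
     (\<exists>Y1 Y2. solves \<beta> \<sigma> \<kappa> \<mu> \<psi> \<epsilon>1 \<epsilon>2 Y1 Y2 (comb (1-w) Y1 Y2) (comb (1-w) Y1 Y2))"
    by (simp add: RPE_def Let_def w_def)
  note B = bridge[OF assms, where \<alpha> = "1-w" and \<gamma> = "1-w" and \<beta>=\<beta> and \<sigma>=\<sigma> and \<mu>=\<mu> and ea=\<epsilon>1 and eb=\<epsilon>2, unfolded c1 c2]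
  show ?thesis unfolding w_def[symmetric] using A B by (rule trans)
qed

lemma ree_iff:
  fixes \<beta> \<sigma> \<kappa> \<mu> \<psi> p q \<epsilon>1 \<epsilon>2 :: real
  assumes "\<kappa> > 0" "\<psi> > 0"
  shows "(\<exists>Y1 Y2. REE \<beta> \<sigma> \<kappa> \<mu> \<psi> p q \<epsilon>1 \<epsilon>2 Y1 Y2) \<longleftrightarrow>
    (\<exists>y1 y2. Sys (\<kappa>*\<sigma>) \<psi> ((1-p)*(1-\<beta>*(p-(1-q))+\<kappa>*\<sigma>)) ((1-q)*(1-\<beta>*(p-(1-q))+\<kappa>*\<sigma>))
        (\<psi>*\<kappa>*\<epsilon>1 + \<kappa>*\<sigma>*(\<psi>-1)*\<mu>) (\<psi>*\<kappa>*\<epsilon>2 + \<kappa>*\<sigma>*(\<psi>-1)*\<mu>) y1 y2)"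
proof -
  have A: "(\<exists>Y1 Y2. REE \<beta> \<sigma> \<kappa> \<mu> \<psi> p q \<epsilon>1 \<epsilon>2 Y1 Y2) \<longleftrightarrow>
     (\<exists>Y1 Y2. solves \<beta> \<sigma> \<kappa> \<mu> \<psi> \<epsilon>1 \<epsilon>2 Y1 Y2 (comb p Y1 Y2) (comb (1-q) Y1 Y2))"
    by (simp add: REE_def)
  note B = bridge[OF assms, where \<alpha> = "p" and \<gamma> = "1-q"]
  have c: "1 - (1 - q) = q" by simp
  show ?thesis using A B unfolding c by (rule trans)
qed

lemma mono1:
  fixes s \<psi> w E b b' X :: real
  assumes s: "s > 0" and ps: "\<psi> > 1" and w0: "0 \<le> w" and w1: "w \<le> 1" and E: "E > 0"
    and b': "0 < b'" and bb: "b' \<le> b"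
    and H: "s*(\<psi>-1)*X + b'*((1-w)*X + w*E) \<ge> 0"
  shows "s*(\<psi>-1)*X + b*((1-w)*X + w*E) \<ge> 0"
proof -
  have sp: "s*(\<psi>-1) > 0" using s ps by simp
  show ?thesis
  proof (cases "X \<ge> 0")
    case True
    have "(1-w)*X \<ge> 0" using w1 True by simp
    moreover have "w*E \<ge> 0" using w0 E by simp
    ultimately have W: "(1-w)*X + w*E \<ge> 0" by linarith
    have "b*((1-w)*X + w*E) \<ge> 0" using W b' bb by simp
    moreover have "s*(\<psi>-1)*X \<ge> 0" using sp True by simp
    ultimately show ?thesis by linarith
  next
    case False
    have "s*(\<psi>-1)*X < 0" using sp False by (simp add: mult_pos_neg)
    hence "b'*((1-w)*X + w*E) > 0" using H by linarith
    hence W: "(1-w)*X + w*E > 0" using b' by (simp add: zero_less_mult_iff)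
    have "b'*((1-w)*X + w*E) \<le> b*((1-w)*X + w*E)" using W bb by (simp add: mult_right_mono)
    thus ?thesis using H by linarith
  qed
qed

lemma mono2:
  fixes s \<psi> w E b b' X :: real
  assumes s: "s > 0" and E: "E > 0" and b': "0 < b'" and bb: "b' \<le> b"
    and H: "b'*((1-w)*X + w*E) \<ge> s*E"
  shows "b*((1-w)*X + w*E) \<ge> s*E"
proof -
  have "s*E > 0" using s E by simp
  hence "b'*((1-w)*X + w*E) > 0" using H by linarith
  hence W: "(1-w)*X + w*E > 0" using b' by (simp add: zero_less_mult_iff)
  have "b'*((1-w)*X + w*E) \<le> b*((1-w)*X + w*E)" using W bb by (simp add: mult_right_mono)
  thus ?thesis using H by linarith
qed

lemma strict1:
  fixes s \<psi> w E b b' X Z :: real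
  assumes s: "s > 0" and ps: "\<psi> > 1" and w0: "0 < w" and w1: "w \<le> 1" and E: "E > 0"
    and b: "0 < b" and bb: "b < b'"
    and Z: "s*(\<psi>-1)*Z + b'*((1-w)*Z + w*E) = 0" and XZ: "X \<le> Z"
  shows "s*(\<psi>-1)*X + b*((1-w)*X + w*E) < 0"
proof -
  have sp: "s*(\<psi>-1) > 0" using s ps by simp
  have b': "b' > 0" using b bb by simp
  have e: "(s*(\<psi>-1) + b'*(1-w))*Z = -(b'*w*E)" using Z by (simp add: algebra_simps)
  have p: "b'*w*E > 0" using b' w0 E by simp
  have "b'*(1-w) \<ge> 0" using b' w1 by simp
  hence q: "s*(\<psi>-1) + b'*(1-w) > 0" using sp by linarith
  have Zn: "Z < 0"
  proof (rule ccontr)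
    assume "\<not> Z < 0"
    hence "(s*(\<psi>-1) + b'*(1-w))*Z \<ge> 0" using q by simp
    thus False using e p by linarith
  qed
  have "s*(\<psi>-1)*Z < 0" using sp Zn by (simp add: mult_pos_neg)
  hence "b'*((1-w)*Z + w*E) > 0" using Z by linarith
  hence W: "(1-w)*Z + w*E > 0" using b' by (simp add: zero_less_mult_iff)
  have "b*((1-w)*Z + w*E) < b'*((1-w)*Z + w*E)" using W bb by simp
  hence Zb: "s*(\<psi>-1)*Z + b*((1-w)*Z + w*E) < 0" using Z by linarith
  have d: "s*(\<psi>-1)*X + b*((1-w)*X + w*E) - (s*(\<psi>-1)*Z + b*((1-w)*Z + w*E)) = (s*(\<psi>-1) + b*(1-w))*(X - Z)"
    by (simp add: algebra_simps)
  have "b*(1-w) \<ge> 0" using b w1 by simp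
  hence "s*(\<psi>-1) + b*(1-w) \<ge> 0" using sp by linarith
  moreover have "X - Z \<le> 0" using XZ by simp
  ultimately have "(s*(\<psi>-1) + b*(1-w))*(X - Z) \<le> 0" by (simp add: mult_nonneg_nonpos)
  thus ?thesis using Zb d by linarith
qed

lemma strict2:
  fixes s w E b b' X Z :: real
  assumes s: "s > 0" and w1: "w \<le> 1" and E: "E > 0" and b: "0 < b" and bb: "b < b'"
    and Z: "b'*((1-w)*Z + w*E) = s*E" and XZ: "X \<le> Z"
  shows "b*((1-w)*X + w*E) < s*E"
proof -
  have b': "b' > 0" using b bb by simp
  have "s*E > 0" using s E by simp
  hence "b'*((1-w)*Z + w*E) > 0" using Z by linarith
  hence W: "(1-w)*Z + w*E > 0" using b' by (simp add: zero_less_mult_iff)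
  have "b*((1-w)*Z + w*E) < b'*((1-w)*Z + w*E)" using W bb by simp
  moreover have "(1-w)*X \<le> (1-w)*Z" using w1 XZ by (simp add: mult_left_mono)
  hence "b*((1-w)*X + w*E) \<le> b*((1-w)*Z + w*E)" using b by (simp add: mult_left_mono)
  ultimately show ?thesis using Z by linarith
qed


lemma mdc: "c \<noteq> 0 \<Longrightarrow> c*(a/c) = (a::real)" by simp

theorem proposition3:
  fixes \<beta> \<sigma> \<kappa> \<mu> \<psi> p q \<epsilon>2 :: real
  assumes "0 < \<beta>" "\<beta> < 1" "0 < \<sigma>" "0 < \<kappa>" "0 < \<mu>" "1 < \<psi>"
    and "0 < p" "p \<le> 1" "0 < q" "q \<le> 1" "(p, q) \<noteq> (1, 1)"
    and "0 \<le> \<epsilon>2"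
  shows "\<exists>eRPE :: ereal. eRPE < \<infinity> \<and>
           (\<forall>\<epsilon>1. (\<exists>Y1 Y2. RPE \<beta> \<sigma> \<kappa> \<mu> \<psi> p q \<epsilon>1 \<epsilon>2 Y1 Y2) \<longleftrightarrow> eRPE \<le> ereal \<epsilon>1) \<and>
           (q = 1 \<longrightarrow> eRPE = - \<infinity>) \<and>
           (\<forall>eREE :: ereal. eREE < \<infinity> \<and>
              (\<forall>\<epsilon>1. (\<exists>Y1 Y2. REE \<beta> \<sigma> \<kappa> \<mu> \<psi> p q \<epsilon>1 \<epsilon>2 Y1 Y2) \<longleftrightarrow> eREE \<le> ereal \<epsilon>1)
              \<longrightarrow> (eRPE \<le> eREE \<longleftrightarrow> 1 \<le> p + q))"
proof -
  have \<beta>0: "0 < \<beta>" and \<beta>1: "\<beta> < 1" and \<sigma>: "0 < \<sigma>" and \<kappa>: "0 < \<kappa>" and \<mu>: "0 < \<mu>"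
    and \<psi>1: "1 < \<psi>" and p0: "0 < p" and p1: "p \<le> 1" and q0: "0 < q" and q1: "q \<le> 1"
    and pq: "(p, q) \<noteq> (1, 1)" and e2: "0 \<le> \<epsilon>2" using assms by auto
  have \<psi>0: "\<psi> > 0" using \<psi>1 by simp
  define s where "s = \<kappa>*\<sigma>"
  have s: "s > 0" unfolding s_def using \<kappa> \<sigma> by simp
  define n where "n = 2 - p - q"
  have n: "n > 0"
  proof (cases "p = 1")
    case True
    hence "q \<noteq> 1" using pq by auto
    thus ?thesis using True q1 n_def by simp
  next
    case False
    thus ?thesis using p1 q1 n_def by simp
  qed
  define w where "w = qbar p q"
  have wn: "w*n = 1-p" unfolding w_def qbar_def n_def using n n_def by simp
  have wn2: "(1-w)*n = 1-q"
  proof -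
    have "(1-w)*n = n - w*n" by (simp add: algebra_simps)
    thus ?thesis using wn n_def by simp
  qed
  have w0: "0 \<le> w" unfolding w_def qbar_def using p1 n n_def by simp
  have w1: "w \<le> 1"
  proof -
    have "(1-w)*n \<ge> 0" using wn2 q1 by simp
    hence "1 - w \<ge> 0" using n by (simp add: zero_le_mult_iff)
    thus ?thesis by simp
  qed
  define K where "K = s*(\<psi>-1)*\<mu>"
  have K: "K > 0" unfolding K_def using s \<psi>1 \<mu> by simp
  define E where "E = \<psi>*\<kappa>*\<epsilon>2 + K"
  have E: "E > 0" unfolding E_def using K \<psi>0 \<kappa> e2 by (simp add: add_nonneg_pos)
  define b where "b = 1 + s"
  have b: "b > 0" unfolding b_def using s by simp
  define Xf where "Xf = (\<lambda>\<epsilon>::real. \<psi>*\<kappa>*\<epsilon> + K)"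
  define PR where "PR = (\<lambda>X. (s*(\<psi>-1)+(1-w)*b)*X + (w*b)*E \<ge> 0 \<or> ((1-w)*b)*X + (w*b - s)*E \<ge> 0)"
  have sp: "s*(\<psi>-1) > 0" using s \<psi>1 by simp
  have RPEiff: "(\<exists>Y1 Y2. RPE \<beta> \<sigma> \<kappa> \<mu> \<psi> p q \<epsilon>1 \<epsilon>2 Y1 Y2) \<longleftrightarrow> PR (Xf \<epsilon>1)" for \<epsilon>1
  proof -
    have "(\<exists>Y1 Y2. RPE \<beta> \<sigma> \<kappa> \<mu> \<psi> p q \<epsilon>1 \<epsilon>2 Y1 Y2) \<longleftrightarrow> (\<exists>y1 y2. Sys s \<psi> (w*b) ((1-w)*b) (Xf \<epsilon>1) E y1 y2)"
      unfolding rpe_iff[OF \<kappa> \<psi>0] s_def w_def b_def Xf_def E_def K_def by simp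
    also have "\<dots> \<longleftrightarrow> PR (Xf \<epsilon>1)"
    proof
      assume "\<exists>y1 y2. Sys s \<psi> (w*b) ((1-w)*b) (Xf \<epsilon>1) E y1 y2"
      then obtain y1 y2 where "Sys s \<psi> (w*b) ((1-w)*b) (Xf \<epsilon>1) E y1 y2" by blast
      from necess[OF s \<psi>1 _ _ this] show "PR (Xf \<epsilon>1)" unfolding PR_def
        using w0 w1 b by (simp add: algebra_simps)
    next
      assume P: "PR (Xf \<epsilon>1)"
      have cc: "(1-w)*b > 0 \<or> w*b > s"
      proof (cases "w = 1")
        case True thus ?thesis using b_def by simp
      next
        case False thus ?thesis using w1 b by simp
      qed
      show "\<exists>y1 y2. Sys s \<psi> (w*b) ((1-w)*b) (Xf \<epsilon>1) E y1 y2"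
        by (rule suff[OF s \<psi>1 _ _ E cc]) (use w0 w1 b P in \<open>auto simp: PR_def algebra_simps\<close>)
    qed
    finally show ?thesis .
  qed
  define X1 where "X1 = -(w*b)*E/(s*(\<psi>-1)+(1-w)*b)"
  define X2 where "X2 = (s - w*b)*E/((1-w)*b)"
  define eR where "eR = (if q = 1 then -\<infinity> else ereal ((min X1 X2 - K)/(\<psi>*\<kappa>)))"
  have eRlt: "eR < \<infinity>" unfolding eR_def by simp
  have charR: "PR (Xf \<epsilon>1) \<longleftrightarrow> eR \<le> ereal \<epsilon>1" for \<epsilon>1
  proof (cases "q = 1")
    case True
    hence "w = 1" using wn2 n by simp
    hence "PR (Xf \<epsilon>1)" unfolding PR_def b_def using E by simp
    thus ?thesis unfolding eR_def using True by simp
  next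
    case False
    hence "(1-w)*n > 0" using wn2 q1 by simp
    hence "1 - w > 0" using n by (simp add: zero_less_mult_iff)
    hence c2: "(1-w)*b > 0" using b by simp
    have A2: "s*(\<psi>-1)+(1-w)*b > 0" using sp c2 by simp
    have i1: "(s*(\<psi>-1)+(1-w)*b)*X + (w*b)*E \<ge> 0 \<longleftrightarrow> X1 \<le> X" for X
    proof -
      have "X1 \<le> X \<longleftrightarrow> -(w*b)*E \<le> X*(s*(\<psi>-1)+(1-w)*b)"
        unfolding X1_def by (rule pos_divide_le_eq[OF A2])
      moreover have "X*(s*(\<psi>-1)+(1-w)*b) = (s*(\<psi>-1)+(1-w)*b)*X" by (rule mult.commute)
      moreover have "-(w*b)*E = -(w*b*E)" by simp
      ultimately show ?thesis by linarith
    qed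
    have i2: "((1-w)*b)*X + (w*b - s)*E \<ge> 0 \<longleftrightarrow> X2 \<le> X" for X
    proof -
      have "X2 \<le> X \<longleftrightarrow> (s - w*b)*E \<le> X*((1-w)*b)"
        unfolding X2_def by (rule pos_divide_le_eq[OF c2])
      moreover have "X*((1-w)*b) = ((1-w)*b)*X" by (rule mult.commute)
      moreover have "(w*b - s)*E = -((s - w*b)*E)" by (simp add: algebra_simps)
      ultimately show ?thesis by linarith
    qed
    have pk: "\<psi>*\<kappa> > 0" using \<psi>0 \<kappa> by simp
    have "PR (Xf \<epsilon>1) \<longleftrightarrow> min X1 X2 \<le> Xf \<epsilon>1" unfolding PR_def i1 i2 by auto
    also have "\<dots> \<longleftrightarrow> (min X1 X2 - K)/(\<psi>*\<kappa>) \<le> \<epsilon>1"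
    proof -
      have "(min X1 X2 - K)/(\<psi>*\<kappa>) \<le> \<epsilon>1 \<longleftrightarrow> min X1 X2 - K \<le> \<epsilon>1*(\<psi>*\<kappa>)"
        by (rule pos_divide_le_eq[OF pk])
      moreover have "\<epsilon>1*(\<psi>*\<kappa>) = \<psi>*\<kappa>*\<epsilon>1" by simp
      ultimately show ?thesis unfolding Xf_def by linarith
    qed
    finally show ?thesis unfolding eR_def using False by simp
  qed
  define lam where "lam = p + q - 1"
  have lam1: "lam \<le> 1" unfolding lam_def using p1 q1 by simp
  have nl: "n = 1 - lam" unfolding n_def lam_def by simp
  have bl: "\<beta>*lam \<le> \<beta>" using mult_left_mono[OF lam1, of \<beta>] \<beta>0 by simp
  have bl1: "1 - \<beta>*lam > 0" using bl \<beta>1 by simp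
  define b' where "b' = n*(1 - \<beta>*lam + s)"
  have b': "b' > 0" unfolding b'_def using n bl1 s by simp
  have bdiff: "b - b' = lam*(1 + \<beta> + s - \<beta>*lam)" unfolding b_def b'_def nl by (simp add: algebra_simps)
  have pos3: "1 + \<beta> + s - \<beta>*lam > 0" using bl1 \<beta>0 s by simp
  have c1': "(1-p)*(1-\<beta>*(p-(1-q))+\<kappa>*\<sigma>) = w*b'"
  proof -
    have "w*b' = (w*n)*(1-\<beta>*lam+s)" unfolding b'_def by (simp add: mult.assoc)
    also have "\<dots> = (1-p)*(1-\<beta>*(p-(1-q))+\<kappa>*\<sigma>)" unfolding wn lam_def s_def by (simp add: algebra_simps)
    finally show ?thesis by simp
  qed
  have c2': "(1-q)*(1-\<beta>*(p-(1-q))+\<kappa>*\<sigma>) = (1-w)*b'"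
  proof -
    have "(1-w)*b' = ((1-w)*n)*(1-\<beta>*lam+s)" unfolding b'_def by (simp add: mult.assoc)
    also have "\<dots> = (1-q)*(1-\<beta>*(p-(1-q))+\<kappa>*\<sigma>)" unfolding wn2 lam_def s_def by (simp add: algebra_simps)
    finally show ?thesis by simp
  qed
  have REEiff: "(\<exists>Y1 Y2. REE \<beta> \<sigma> \<kappa> \<mu> \<psi> p q \<epsilon>1 \<epsilon>2 Y1 Y2) \<longleftrightarrow>
      (\<exists>y1 y2. Sys s \<psi> (w*b') ((1-w)*b') (Xf \<epsilon>1) E y1 y2)" for \<epsilon>1
    unfolding ree_iff[OF \<kappa> \<psi>0] c1' c2' unfolding s_def Xf_def E_def K_def by simp
  have part2: "eR \<le> eREE \<longleftrightarrow> 1 \<le> p + q"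
    if lt: "eREE < \<infinity>" and ch: "\<forall>\<epsilon>1. (\<exists>Y1 Y2. REE \<beta> \<sigma> \<kappa> \<mu> \<psi> p q \<epsilon>1 \<epsilon>2 Y1 Y2) \<longleftrightarrow> eREE \<le> ereal \<epsilon>1"
    for eREE
  proof
    assume le: "eR \<le> eREE"
    show "1 \<le> p + q"
    proof (rule ccontr)
      assume "\<not> 1 \<le> p + q"
      hence lamn: "lam < 0" unfolding lam_def by simp
      have "lam*(1 + \<beta> + s - \<beta>*lam) < 0" using lamn pos3 by (simp add: mult_neg_pos)
      hence bb: "b < b'" using bdiff by simp
      have pl: "p < 1" and ql: "q < 1" using lamn lam_def q0 p0 by auto
      have "w*n > 0" using wn pl by simp
      hence wpos: "w > 0" using n by (simp add: zero_less_mult_iff)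
      have "(1-w)*n > 0" using wn2 ql by simp
      hence wl: "1 - w > 0" using n by (simp add: zero_less_mult_iff)
      have c2p: "(1-w)*b' > 0" using wl b' by simp
      have A2: "s*(\<psi>-1)+(1-w)*b' > 0" using sp c2p by simp
      define Z1 where "Z1 = -(w*b')*E/(s*(\<psi>-1)+(1-w)*b')"
      define Z2 where "Z2 = (s - w*b')*E/((1-w)*b')"
      have hZ1: "(s*(\<psi>-1)+(1-w)*b')*Z1 = -(w*b')*E" unfolding Z1_def using A2 by simp
      have hZ2: "((1-w)*b')*Z2 = (s - w*b')*E" unfolding Z2_def by (rule mdc) (use wl b' in simp)
      define Xs where "Xs = min Z1 Z2"
      define es where "es = (Xs - K)/(\<psi>*\<kappa>)"
      have Xes: "Xf es = Xs" unfolding Xf_def es_def using \<psi>0 \<kappa> by simp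
      have "\<exists>y1 y2. Sys s \<psi> (w*b') ((1-w)*b') Xs E y1 y2"
      proof (rule suff[OF s \<psi>1 _ _ E])
        show "0 \<le> w*b'" using w0 b' by simp
        show "0 \<le> (1-w)*b'" using c2p by simp
        show "0 < (1-w)*b' \<or> s < w*b'" using c2p by simp
        show "0 \<le> (s*(\<psi>-1)+(1-w)*b')*Xs + w*b'*E \<or> 0 \<le> (1-w)*b'*Xs + (w*b'-s)*E"
        proof (cases "Z1 \<le> Z2")
          case True
          hence "Xs = Z1" unfolding Xs_def by simp
          thus ?thesis using hZ1 by simp
        next
          case False
          hence "Xs = Z2" unfolding Xs_def by simp
          thus ?thesis using hZ2 by (simp add: algebra_simps)
        qed
      qed
      hence "\<exists>Y1 Y2. REE \<beta> \<sigma> \<kappa> \<mu> \<psi> p q es \<epsilon>2 Y1 Y2" unfolding REEiff Xes .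
      hence "eREE \<le> ereal es" using ch by blast
      hence "eR \<le> ereal es" using le by simp
      hence "PR Xs" using charR Xes by metis
      moreover have "\<not> ((s*(\<psi>-1)+(1-w)*b)*Xs + (w*b)*E \<ge> 0)"
      proof -
        have "s*(\<psi>-1)*Xs + b*((1-w)*Xs + w*E) < 0"
          by (rule strict1[OF s \<psi>1 wpos w1 E b bb, of Z1]) (use hZ1 in \<open>simp_all add: Xs_def algebra_simps\<close>)
        thus ?thesis by (simp add: algebra_simps)
      qed
      moreover have "\<not> (((1-w)*b)*Xs + (w*b - s)*E \<ge> 0)"
      proof -
        have "b*((1-w)*Xs + w*E) < s*E"
          by (rule strict2[OF s w1 E b bb, of Z2]) (use hZ2 in \<open>simp_all add: Xs_def algebra_simps\<close>)
        thus ?thesis by (simp add: algebra_simps)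
      qed
      ultimately show False unfolding PR_def by blast
    qed
  next
    assume "1 \<le> p + q"
    hence lamp: "lam \<ge> 0" unfolding lam_def by simp
    have "lam*(1 + \<beta> + s - \<beta>*lam) \<ge> 0" using lamp pos3 by simp
    hence bb: "b' \<le> b" using bdiff by simp
    have inc: "PR (Xf \<epsilon>1)" if R: "\<exists>Y1 Y2. REE \<beta> \<sigma> \<kappa> \<mu> \<psi> p q \<epsilon>1 \<epsilon>2 Y1 Y2" for \<epsilon>1
    proof -
      obtain y1 y2 where S: "Sys s \<psi> (w*b') ((1-w)*b') (Xf \<epsilon>1) E y1 y2" using R REEiff by blast
      have c1n: "0 \<le> w*b'" using w0 b' by simp
      have c2n: "0 \<le> (1-w)*b'" using w1 b' by simp
      from necess[OF s \<psi>1 c1n c2n S]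
      have "s*(\<psi>-1)*Xf \<epsilon>1 + b'*((1-w)*Xf \<epsilon>1 + w*E) \<ge> 0 \<or> b'*((1-w)*Xf \<epsilon>1 + w*E) \<ge> s*E"
        by (simp add: algebra_simps)
      thus ?thesis
      proof
        assume "s*(\<psi>-1)*Xf \<epsilon>1 + b'*((1-w)*Xf \<epsilon>1 + w*E) \<ge> 0"
        from mono1[OF s \<psi>1 w0 w1 E b' bb this] show ?thesis unfolding PR_def by (simp add: algebra_simps)
      next
        assume "b'*((1-w)*Xf \<epsilon>1 + w*E) \<ge> s*E"
        from mono2[OF s E b' bb this] show ?thesis unfolding PR_def by (simp add: algebra_simps)
      qed
    qed
    show "eR \<le> eREE"
    proof (cases eREE rule: ereal_cases)
      case (real r)
      hence "\<exists>Y1 Y2. REE \<beta> \<sigma> \<kappa> \<mu> \<psi> p q r \<epsilon>2 Y1 Y2" using ch by simp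
      hence "PR (Xf r)" by (rule inc)
      thus ?thesis using charR real by simp
    next
      case PInf
      thus ?thesis using lt by simp
    next
      case MInf
      hence all: "eR \<le> ereal t" for t using ch inc charR by simp
      show ?thesis
      proof (cases eR rule: ereal_cases)
        case (real r)
        thus ?thesis using all[of "r - 1"] by simp
      next
        case PInf thus ?thesis using eRlt by simp
      next
        case MInf thus ?thesis by simp
      qed
    qed
  qed
  show ?thesis
    apply (rule exI[of _ eR])
    using eRlt RPEiff charR part2 by (simp add: eR_def[of] split del: if_split) 
qed

end
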